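(* For the push-pull ring with $M\ge 2$ servers in the critical case $\lambda_j=\mu_j$ for all $j$, the action drift matrix $\mathbf{D}$ satisfies $\mathrm{rank}(\mathbf{D})=M$ if $M$ is odd and $\mathrm{rank}(\mathbf{D})=M-1$ if $M$ is even. Moreover, when $M$ is even, the vector $\boldsymbol{\alpha}=(+\lambda_1^{-1},-\lambda_2^{-1},+\lambda_3^{-1},-\lambda_4^{-1},\dots,+\lambda_{M-1}^{-1},-\lambda_M^{-1})'$ satisfies $\mathbf{D}\boldsymbol{\alpha}=\mathbf{0}$.
   Context: A push-pull ring has $M\ge2$ servers and $M$ job streams, with strictly positive rates $\lambda_j,\mu_j$; indices are modulo $M$ on $\{1,\dots,M\}$. Server $j$ can either push on stream $j$ (exponential rate $\lambda_j$, adding a job to queue $j$) or pull from queue $j-1$ (exponential rate $\mu_{j-1}$, removing a job from queue $j-1$). An action is an element $a\in\{\text{push},\text{pull}\}^M$ specifying the operation of each server; there are $2^M$ actions. For an action $a$, let $r_a$ be the sum of the rates of the $M$ chosen operations, and let the drift vector $\boldsymbol{\Delta}_a\in\mathbb{R}^M$ be the expected one-step increment of the embedded jump chain under $a$ (each chosen operation completes first with probability its rate divided by $r_a$): its $j$-th entry is $\big(\lambda_j\mathbf{1}\{\text{server } j \text{ pushes}\}-\mu_j\mathbf{1}\{\text{server } j+1 \text{ pulls}\}\big)/r_a$. The action drift matrix $\mathbf{D}$ is the $2^M\times M$ matrix whose rows are $\boldsymbol{\Delta}_a'$ over all $2^M$ actions $a$. *)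

theory Defs
  imports "Jordan_Normal_Form.DL_Rank"
begin

(* Servers / streams are indexed by 1..M; indices are taken modulo M on {1..M}. *)
definition ring_succ :: "nat \<Rightarrow> nat \<Rightarrow> nat" where
  "ring_succ M j = (if j = M then 1 else j + 1)"

definition ring_pred :: "nat \<Rightarrow> nat \<Rightarrow> nat" where
  "ring_pred M j = (if j = 1 then M else j - 1)"

(* An action is a bool list a of length M; a ! (j-1) = True means server j pushes,
   False means server j pulls (from queue j-1). *)
definition pushes :: "bool list \<Rightarrow> nat \<Rightarrow> bool" where
  "pushes a j = a ! (j - 1)"

definition all_actions :: "nat \<Rightarrow> bool list list" where
  "all_actions M = product_lists (replicate M [True, False])"

definition total_rate :: "(nat \<Rightarrow> real) \<Rightarrow> (nat \<Rightarrow> real) \<Rightarrow> nat \<Rightarrow> bool list \<Rightarrow> real" where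
  "total_rate lam mu M a =
     (\<Sum>j=1..M. if pushes a j then lam j else mu (ring_pred M j))"

definition drift :: "(nat \<Rightarrow> real) \<Rightarrow> (nat \<Rightarrow> real) \<Rightarrow> nat \<Rightarrow> bool list \<Rightarrow> nat \<Rightarrow> real" where
  "drift lam mu M a j =
     ((if pushes a j then lam j else 0)
      - (if \<not> pushes a (ring_succ M j) then mu j else 0)) / total_rate lam mu M a"

(* The action drift matrix: 2^M x M, rows Delta_a' over all actions a;
   column c (0-based) corresponds to stream c+1. *)
definition drift_matrix :: "(nat \<Rightarrow> real) \<Rightarrow> (nat \<Rightarrow> real) \<Rightarrow> nat \<Rightarrow> real mat" where
  "drift_matrix lam mu M =
     mat_of_rows M (map (\<lambda>a. vec M (\<lambda>c. drift lam mu M a (c + 1))) (all_actions M))"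

end

theory Submission
  imports Defs
begin

lemma pred_iff:
  fixes c M k :: nat
  assumes "c < M" "k < M"
  shows "((c+1) mod M = k) = (c = (k+M-1) mod M)"
proof -
  have e1: "(c+1) mod M = (if c+1 = M then 0 else c+1)" using assms by simp
  have e2: "(k+M-1) mod M = (if k = 0 then M - 1 else k - 1)"
  proof (cases "k = 0")
    case True then show ?thesis using assms by simp
  next
    case False
    then have "k+M-1 = (k-1) + M" by simp
    then have "(k+M-1) mod M = (k-1) mod M" by simp
    then show ?thesis using False assms by simp
  qed
  show ?thesis unfolding e1 e2 using assms by (cases "c+1 = M"; cases "k=0"; simp; linarith)
qed

lemma comb_pairs:
  fixes z :: "nat \<Rightarrow> real"
  assumes M: "M \<ge> 2"
    and H: "\<And>a. length a = M \<Longrightarrow>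
      (\<Sum>c<M. z c * ((if a!c then 1 else 0) - (if a!((c+1) mod M) then 0 else 1))) = 0"
  shows "\<And>k. k < M \<Longrightarrow> z k + z ((k+M-1) mod M) = 0"
proof -
  have "(\<Sum>c<M. z c * ((if replicate M False ! c then 1 else 0)
       - (if replicate M False ! ((c+1) mod M) then 0 else 1))) = (\<Sum>c<M. - z c)"
  proof (rule sum.cong[OF refl])
    fix c assume c: "c \<in> {..<M}"
    have m: "(c+1) mod M < M" using M by simp
    show "z c * ((if replicate M False ! c then 1 else 0)
       - (if replicate M False ! ((c+1) mod M) then 0 else 1)) = - z c"
      using c m by (simp add: nth_replicate)
  qed
  then have s0: "(\<Sum>c<M. z c) = 0"
    using H[of "replicate M False"] by (simp add: sum_negf)
  fix k assume k: "k < M"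
  define a where "a = (replicate M False)[k := True]"
  have la: "length a = M" by (simp add: a_def)
  have "(\<Sum>c<M. z c * ((if a!c then 1 else 0) - (if a!((c+1) mod M) then 0 else 1)))
      = (\<Sum>c<M. (if c = k then z c else 0) + (if c = (k+M-1) mod M then z c else 0) - z c)"
  proof (rule sum.cong[OF refl])
    fix c assume c: "c \<in> {..<M}"
    have m: "(c+1) mod M < M" using M by simp
    have ac: "a!c = (c = k)" using c k by (auto simp: a_def nth_list_update)
    have "a!((c+1) mod M) = ((c+1) mod M = k)" using m k by (auto simp: a_def nth_list_update)
    then have am: "a!((c+1) mod M) = (c = (k+M-1) mod M)" using pred_iff[of c M k] c k by simp
    show "z c * ((if a!c then 1 else 0) - (if a!((c+1) mod M) then 0 else 1))
      = (if c = k then z c else 0) + (if c = (k+M-1) mod M then z c else 0) - z c"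
      unfolding ac am by (cases "c=k"; cases "c = (k+M-1) mod M"; simp)
  qed
  also have "\<dots> = (\<Sum>c<M. (if c = k then z c else 0)) + (\<Sum>c<M. (if c = (k+M-1) mod M then z c else 0)) - (\<Sum>c<M. z c)"
    by (simp only: sum.distrib sum_subtractf)
  also have "\<dots> = z k + z ((k+M-1) mod M) - (\<Sum>c<M. z c)"
  proof -
    have p: "(k+M-1) mod M < M" using M by simp
    show ?thesis using k p by (simp only: sum.delta finite_lessThan lessThan_iff if_True)
  qed
  finally show "z k + z ((k+M-1) mod M) = 0" using H[OF la] s0 by linarith
qed

lemma alt_vals:
  fixes z :: "nat \<Rightarrow> real"
  assumes M: "M \<ge> 2" and P: "\<And>k. k < M \<Longrightarrow> z k + z ((k+M-1) mod M) = 0"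
  shows "\<And>k. k < M \<Longrightarrow> z k = (-1)^k * z 0"
proof -
  fix k show "k < M \<Longrightarrow> z k = (-1)^k * z 0"
  proof (induct k)
    case 0 then show ?case by simp
  next
    case (Suc k)
    have "(Suc k + M - 1) mod M = k" using Suc.prems by simp
    then have "z (Suc k) = - z k" using P[OF Suc.prems] by simp
    moreover have "z k = (-1)^k * z 0" using Suc by simp
    ultimately show ?case by simp
  qed
qed

lemma zero_odd:
  fixes z :: "nat \<Rightarrow> real"
  assumes M: "M \<ge> 2" and P: "\<And>k. k < M \<Longrightarrow> z k + z ((k+M-1) mod M) = 0" and "odd M"
  shows "\<And>k. k < M \<Longrightarrow> z k = 0"
proof -
  have a: "z (M-1) = (-1)^(M-1) * z 0" using alt_vals[of M z, OF M P, of "M-1"] M by linarith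
  have "even (M-1)" using \<open>odd M\<close> M by simp
  then have "z (M-1) = z 0" using a by simp
  moreover have "z 0 + z (M-1) = 0" using P[of 0] M by simp
  ultimately have z0: "z 0 = 0" by simp
  fix k assume "k < M"
  then show "z k = 0" using alt_vals[of M z, OF M P, of k] z0 by simp
qed

lemma zero_even:
  fixes z :: "nat \<Rightarrow> real"
  assumes M: "M \<ge> 2" and P: "\<And>k. k < M \<Longrightarrow> z k + z ((k+M-1) mod M) = 0" and "z (M-1) = 0"
  shows "\<And>k. k < M \<Longrightarrow> z k = 0"
proof -
  have "z 0 + z (M-1) = 0" using P[of 0] M by simp
  then have z0: "z 0 = 0" using assms by simp
  fix k assume "k < M"
  then show "z k = 0" using alt_vals[of M z, OF M P, of k] z0 by simp
qed


lemma (in vec_space) non_distinct_low_rank':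
assumes "A \<in> carrier_mat n nc"
and "\<not> distinct (cols A)"
shows "rank A < nc"
proof -
  obtain S where "maximal S (\<lambda>T. T \<subseteq> set (cols A) \<and> lin_indpt T)"
    using maximal_exists[of "(\<lambda>T. T \<subseteq> set (cols A) \<and> lin_indpt T)" "card (set (cols A))" "{}"]
    by (meson List.finite_set card_mono empty_iff empty_subsetI finite_lin_indpt2 rev_finite_subset)
  then have "card S \<le> card (set (cols A))" by (simp add: card_mono maximal_def)
  then have "card S < nc"
    using assms(1) cols_length card_length \<open>\<not> distinct (cols A)\<close> card_distinct carrier_matD(2) nat_less_le
    by (metis dual_order.antisym dual_order.trans)
  then show ?thesis
    using rank_card_indpt[OF \<open>A \<in> carrier_mat n nc\<close> \<open>maximal S (\<lambda>T. T \<subseteq> set (cols A) \<and> lin_indpt T)\<close>]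
    by simp
qed

lemma mult_entry:
  assumes "A \<in> carrier_mat n m" "x \<in> carrier_vec m" "i < n"
  shows "(A *\<^sub>v x) $ i = (\<Sum>c<m. A $$ (i,c) * x $ c)"
  using assms by (auto simp: scalar_prod_def atLeast0LessThan intro!: sum.cong)

lemma distinct_from_null:
  fixes A :: "'a::field mat"
  assumes A: "A \<in> carrier_mat n m" and N: "\<forall>v\<in>carrier_vec m. A *\<^sub>v v = 0\<^sub>v n \<longrightarrow> v = 0\<^sub>v m"
  shows "distinct (cols A)"
proof (rule ccontr)
  assume "\<not> distinct (cols A)"
  then obtain i j where ij: "i < length (cols A)" "j < length (cols A)" "i \<noteq> j" "cols A ! i = cols A ! j"
    by (auto simp: distinct_conv_nth)
  have im: "i < m" "j < m" using ij A by auto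
  have cij: "col A i = col A j" using ij A by (simp add: cols_nth)
  define v where "v = vec m (\<lambda>k. (if k = i then 1 else 0) - (if k = j then 1 else (0::'a)))"
  have vc: "v \<in> carrier_vec m" by (simp add: v_def)
  have "A *\<^sub>v v = 0\<^sub>v n"
  proof (rule eq_vecI)
    fix r assume "r < dim_vec (0\<^sub>v n :: 'a vec)"
    then have r: "r < n" by simp
    have "(A *\<^sub>v v) $ r = (\<Sum>c<m. A $$ (r,c) * ((if c = i then 1 else 0) - (if c = j then 1 else 0)))"
      using mult_entry[OF A vc r] by (simp add: v_def)
    also have "\<dots> = (\<Sum>c<m. (if c = i then A $$ (r,c) else 0)) - (\<Sum>c<m. (if c = j then A $$ (r,c) else 0))"
    proof -
      have "(\<Sum>c<m. A $$ (r,c) * ((if c = i then 1 else 0) - (if c = j then 1 else 0)))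
         = (\<Sum>c<m. (if c = i then A $$ (r,c) else 0) - (if c = j then A $$ (r,c) else 0))"
        by (rule sum.cong) auto
      then show ?thesis by (simp only: sum_subtractf)
    qed
    also have "\<dots> = A $$ (r,i) - A $$ (r,j)" using im by simp
    also have "\<dots> = 0" using cij r A im
      by (metis carrier_matD(1) col_def index_vec right_minus_eq)
    finally show "(A *\<^sub>v v) $ r = 0\<^sub>v n $ r" using r by simp
  qed (use A in simp)
  then have "v = 0\<^sub>v m" using N vc by blast
  then have "v $ i = 0" using im by simp
  then show False using im ij by (simp add: v_def)
qed

lemma (in vec_space) full_rank_from_null:
  assumes A: "A \<in> carrier_mat n nc" and N: "\<forall>v\<in>carrier_vec nc. A *\<^sub>v v = 0\<^sub>v n \<longrightarrow> v = 0\<^sub>v nc"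
  shows "rank A = nc" "distinct (cols A)" "lin_indpt (set (cols A))"
proof -
  show d: "distinct (cols A)" by (rule distinct_from_null[OF A N])
  show li: "lin_indpt (set (cols A))"
  proof (rule ccontr)
    assume "\<not> lin_indpt (set (cols A))"
    then obtain v where "v \<in> carrier_vec nc" "v \<noteq> 0\<^sub>v nc" "A *\<^sub>v v = 0\<^sub>v n"
      using lin_depE[OF A _ d] by blast
    then show False using N by blast
  qed
  show "rank A = nc" by (rule lin_indpt_full_rank[OF A d li])
qed

lemma (in vec_space) rank_lt_from_dep:
  assumes A: "A \<in> carrier_mat n nc" and v: "v \<in> carrier_vec nc" "v \<noteq> 0\<^sub>v nc" "A *\<^sub>v v = 0\<^sub>v n"
  shows "rank A < nc"
proof (cases "distinct (cols A)")
  case True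
  have "lin_dep (set (cols A))" by (rule lin_depI[OF A v True])
  then have "rank A \<noteq> nc" using full_rank_lin_indpt[OF A _ True] by blast
  then show ?thesis using rank_le_nc[OF A] by simp
next
  case False
  then show ?thesis by (rule non_distinct_low_rank'[OF A])
qed

lemma (in vec_space) rank_ge_sub:
  assumes A: "A \<in> carrier_mat n nc" and B: "B \<in> carrier_mat n k"
    and sub: "set (cols B) \<subseteq> set (cols A)"
    and N: "\<forall>v\<in>carrier_vec k. B *\<^sub>v v = 0\<^sub>v n \<longrightarrow> v = 0\<^sub>v k"
  shows "rank A \<ge> k"
proof -
  have d: "distinct (cols B)" and li: "lin_indpt (set (cols B))"
    using full_rank_from_null[OF B N] by auto
  have "card (set (cols B)) = k" using distinct_card[OF d] B by simp
  then show ?thesis using rank_ge_card_indpt[OF A sub li] by simp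
qed


lemma set_all_actions: "set (all_actions M) = {a. length a = M}"
  unfolding all_actions_def product_lists_set by (auto simp: list_all2_conv_all_nth)

lemma len_all_actions: "length (all_actions M) = 2^M"
  unfolding all_actions_def by (induct M) (auto simp: length_product_lists)

lemma D_carrier: "drift_matrix lam mu M \<in> carrier_mat (2^M) M"
  unfolding drift_matrix_def using mat_of_rows_carrier(1)[of M "map (\<lambda>a. vec M (\<lambda>c. drift lam mu M a (c + 1))) (all_actions M)"]
  by (simp add: len_all_actions)

lemma D_index: "i < 2^M \<Longrightarrow> c < M \<Longrightarrow>
  drift_matrix lam mu M $$ (i,c) = drift lam mu M (all_actions M ! i) (c+1)"
  unfolding drift_matrix_def by (simp add: mat_of_rows_index len_all_actions)

lemma rate_pos:
  assumes "M \<ge> 2" "\<And>j. j \<in> {1..M} \<Longrightarrow> lam j > 0" "\<And>j. j \<in> {1..M} \<Longrightarrow> mu j > 0"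
  shows "total_rate lam mu M a > 0"
  unfolding total_rate_def
proof (rule sum_pos)
  show "finite {1..M}" by simp
  show "{1..M} \<noteq> {}" using assms by simp
  fix j assume j: "j \<in> {1..M}"
  have "ring_pred M j \<in> {1..M}" using j by (auto simp: ring_pred_def)
  then show "0 < (if pushes a j then lam j else mu (ring_pred M j))" using j assms by auto
qed

lemma drift_eq:
  assumes M: "M \<ge> 2" and eq: "\<And>j. j \<in> {1..M} \<Longrightarrow> mu j = lam j" and c: "c < M"
  shows "drift lam mu M a (c+1) = lam (c+1) * ((if a!c then 1 else 0)
          - (if a!((c+1) mod M) then 0 else 1)) / total_rate lam mu M a"
proof -
  have p1: "pushes a (c+1) = a!c" by (simp add: pushes_def)
  have "ring_succ M (c+1) - 1 = (c+1) mod M" using c by (auto simp: ring_succ_def)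
  then have p2: "pushes a (ring_succ M (c+1)) = a!((c+1) mod M)" by (simp add: pushes_def)
  have m: "mu (c+1) = lam (c+1)" using eq c by simp
  show ?thesis unfolding drift_def p1 p2 m
    by (cases "a!c"; cases "a!((c+1) mod M)"; simp)
qed

lemma row_sum:
  fixes x :: "nat \<Rightarrow> real"
  assumes M: "M \<ge> 2" and eq: "\<And>j. j \<in> {1..M} \<Longrightarrow> mu j = lam j" and i: "i < 2^M"
  shows "(\<Sum>c<M. drift_matrix lam mu M $$ (i,c) * x c)
    = (\<Sum>c<M. lam (c+1) * x c * ((if (all_actions M ! i)!c then 1 else 0)
          - (if (all_actions M ! i)!((c+1) mod M) then 0 else 1))) / total_rate lam mu M (all_actions M ! i)"
  unfolding sum_divide_distrib
proof (rule sum.cong[OF refl])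
  fix c assume "c \<in> {..<M}"
  then have c: "c < M" by simp
  have "drift_matrix lam mu M $$ (i,c) = drift lam mu M (all_actions M ! i) (c+1)"
    using D_index[OF i c] .
  also have "\<dots> = lam (c+1) * ((if (all_actions M ! i)!c then 1 else 0)
          - (if (all_actions M ! i)!((c+1) mod M) then 0 else 1)) / total_rate lam mu M (all_actions M ! i)"
    by (rule drift_eq[OF M eq c])
  finally show "drift_matrix lam mu M $$ (i,c) * x c = lam (c+1) * x c * ((if (all_actions M ! i)!c then 1 else 0)
          - (if (all_actions M ! i)!((c+1) mod M) then 0 else 1)) / total_rate lam mu M (all_actions M ! i)"
    by simp
qed

lemma null_key:
  fixes x :: "nat \<Rightarrow> real"
  assumes M: "M \<ge> 2" and pos: "\<And>j. j \<in> {1..M} \<Longrightarrow> lam j > 0"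
    and mpos: "\<And>j. j \<in> {1..M} \<Longrightarrow> mu j > 0"
    and eq: "\<And>j. j \<in> {1..M} \<Longrightarrow> mu j = lam j"
    and N: "\<And>i. i < 2^M \<Longrightarrow> (\<Sum>c<M. drift_matrix lam mu M $$ (i,c) * x c) = 0"
  shows "\<And>k. k < M \<Longrightarrow> (\<lambda>c. lam (c+1) * x c) k + (\<lambda>c. lam (c+1) * x c) ((k+M-1) mod M) = 0"
proof -
  define z where "z c = lam (c+1) * x c" for c
  have H: "(\<Sum>c<M. z c * ((if a!c then 1 else 0) - (if a!((c+1) mod M) then 0 else 1))) = 0"
    if la: "length a = M" for a
  proof -
    have "a \<in> set (all_actions M)" using la by (simp add: set_all_actions)
    then obtain i where i: "i < 2^M" "a = all_actions M ! i"
      by (auto simp: in_set_conv_nth len_all_actions)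
    have r: "total_rate lam mu M a > 0" using rate_pos[OF M pos mpos] .
    have "(\<Sum>c<M. z c * ((if a!c then 1 else 0) - (if a!((c+1) mod M) then 0 else 1))) / total_rate lam mu M a = 0"
      using row_sum[where x=x, OF M eq i(1)] N[OF i(1)] i(2) by (simp add: z_def)
    then show ?thesis using r by simp
  qed
  have P: "\<And>k. k < M \<Longrightarrow> z k + z ((k+M-1) mod M) = 0" by (rule comb_pairs[OF M H])
  fix k assume k: "k < M"
  show "(\<lambda>c. lam (c+1) * x c) k + (\<lambda>c. lam (c+1) * x c) ((k+M-1) mod M) = 0"
    using P[OF k] by (simp add: z_def)
qed


lemma alt_one: "(\<Sum>c<2*k. (-1::real)^c) = 0"
  by (induct k) (auto simp: sum.lessThan_Suc)

lemma alt_sum: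
  fixes f :: "nat \<Rightarrow> real"
  assumes e: "even M" and M: "M \<ge> 2"
  shows "(\<Sum>c<M. (-1)^c * (f c - 1 + f ((c+1) mod M))) = 0"
proof -
  obtain m where m: "M = Suc m" using M by (cases M) auto
  have om: "odd m" using e m by simp
  have s1: "(\<Sum>c<M. (-1::real)^c) = 0" using alt_one[of "M div 2"] e by simp
  have s2: "(\<Sum>c<M. (-1)^c * f c) = f 0 - (\<Sum>c<m. (-1)^c * f (Suc c))"
    unfolding m sum.lessThan_Suc_shift by (simp add: sum_negf)
  have s3: "(\<Sum>c<M. (-1)^c * f ((c+1) mod M)) = (\<Sum>c<m. (-1)^c * f (Suc c)) + (-1)^m * f 0"
  proof -
    have "(\<Sum>c<M. (-1)^c * f ((c+1) mod M)) = (\<Sum>c<m. (-1)^c * f ((c+1) mod M)) + (-1)^m * f ((m+1) mod M)"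
      unfolding m by (simp only: sum.lessThan_Suc)
    also have "(\<Sum>c<m. (-1)^c * f ((c+1) mod M)) = (\<Sum>c<m. (-1)^c * f (Suc c))"
      by (rule sum.cong) (auto simp: m)
    also have "(m+1) mod M = 0" using m by simp
    finally show ?thesis by simp
  qed
  have "(\<Sum>c<M. (-1)^c * (f c - 1 + f ((c+1) mod M)))
      = (\<Sum>c<M. (-1)^c * f c) - (\<Sum>c<M. (-1::real)^c) + (\<Sum>c<M. (-1)^c * f ((c+1) mod M))"
    by (simp add: ring_distribs sum.distrib sum_subtractf)
  also have "\<dots> = 0" unfolding s1 s2 s3 using om by simp
  finally show ?thesis .
qed


theorem lemma2:
  fixes M :: nat and lam mu :: "nat \<Rightarrow> real"
  assumes "M \<ge> 2"
    and "\<And>j. j \<in> {1..M} \<Longrightarrow> lam j > 0"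
    and "\<And>j. j \<in> {1..M} \<Longrightarrow> mu j > 0"
    and "\<And>j. j \<in> {1..M} \<Longrightarrow> mu j = lam j"
  shows "vec_space.rank (2 ^ M) (drift_matrix lam mu M) = (if odd M then M else M - 1)
       \<and> (even M \<longrightarrow>
            drift_matrix lam mu M *\<^sub>v vec M (\<lambda>c. (-1) ^ c / lam (c + 1)) = 0\<^sub>v (2 ^ M))"
proof -
  note M = assms(1) and pos = assms(2) and mpos = assms(3) and eq = assms(4)
  define D where "D = drift_matrix lam mu M"
  have Dc: "D \<in> carrier_mat (2^M) M" unfolding D_def by (rule D_carrier)
  interpret V: vec_space "TYPE(real)" "2^M" .
  have lpos: "lam (k+1) > 0" if "k < M" for k using pos that by simp
  have pairs: "(\<lambda>c. lam (c+1) * x c) k + (\<lambda>c. lam (c+1) * x c) ((k+M-1) mod M) = 0"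
    if "\<And>i. i < 2^M \<Longrightarrow> (\<Sum>c<M. D $$ (i,c) * x c) = 0" "k < M" for x k
  proof -
    have N': "\<And>i. i<2^M \<Longrightarrow> (\<Sum>c<M. drift_matrix lam mu M $$ (i,c) * x c) = 0"
      using that(1) unfolding D_def .
    show ?thesis by (rule null_key[where x=x, OF M pos mpos eq N' that(2)])
  qed
  define alpha where "alpha = vec M (\<lambda>c. (-1) ^ c / lam (c + 1))"
  have ac: "alpha \<in> carrier_vec M" by (simp add: alpha_def)
  have Dalpha: "D *\<^sub>v alpha = 0\<^sub>v (2^M)" if e: "even M"
  proof (rule eq_vecI)
    fix i assume "i < dim_vec (0\<^sub>v (2^M) :: real vec)"
    then have i: "i < 2^M" by simp
    define a where "a = all_actions M ! i"
    define f where "f c = (if a!c then 1 else (0::real))" for c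
    have "(D *\<^sub>v alpha) $ i = (\<Sum>c<M. D $$ (i,c) * ((-1) ^ c / lam (c + 1)))"
      unfolding mult_entry[OF Dc ac i] by (rule sum.cong) (auto simp: alpha_def)
    also have "\<dots> = (\<Sum>c<M. lam (c+1) * ((-1) ^ c / lam (c + 1)) * ((if a!c then 1 else 0)
          - (if a!((c+1) mod M) then 0 else 1))) / total_rate lam mu M a"
      unfolding D_def a_def by (rule row_sum[OF M eq i])
    also have "(\<Sum>c<M. lam (c+1) * ((-1) ^ c / lam (c + 1)) * ((if a!c then 1 else 0)
          - (if a!((c+1) mod M) then 0 else 1))) = (\<Sum>c<M. (-1)^c * (f c - 1 + f ((c+1) mod M)))"
    proof (rule sum.cong[OF refl])
      fix c assume "c \<in> {..<M}"
      then have "lam (c+1) \<noteq> 0" using lpos by force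
      then show "lam (c+1) * ((-1) ^ c / lam (c + 1)) * ((if a!c then 1 else 0)
          - (if a!((c+1) mod M) then 0 else 1)) = (-1)^c * (f c - 1 + f ((c+1) mod M))"
        unfolding f_def by (cases "a!c"; cases "a!((c+1) mod M)"; simp)
    qed
    also have "(\<Sum>c<M. (-1)^c * (f c - 1 + f ((c+1) mod M))) = 0" by (rule alt_sum[OF e M])
    finally show "(D *\<^sub>v alpha) $ i = 0\<^sub>v (2^M) $ i" using i by simp
  qed (use Dc in simp)
  have rank_eq: "V.rank D = (if odd M then M else M - 1)"
  proof (cases "odd M")
    case True
    have N: "\<forall>v\<in>carrier_vec M. D *\<^sub>v v = 0\<^sub>v (2^M) \<longrightarrow> v = 0\<^sub>v M"
    proof (intro ballI impI)
      fix v :: "real vec" assume vc: "v \<in> carrier_vec M" and Dv: "D *\<^sub>v v = 0\<^sub>v (2^M)"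
      have S: "(\<Sum>c<M. D $$ (i,c) * v $ c) = 0" if "i < 2^M" for i
        using mult_entry[OF Dc vc that] Dv that by simp
      have z: "lam (k+1) * v $ k = 0" if "k < M" for k
        using zero_odd[of M "\<lambda>c. lam (c+1) * v $ c", OF M pairs[OF S] True that] by simp
      show "v = 0\<^sub>v M"
      proof (rule eq_vecI)
        fix k assume "k < dim_vec (0\<^sub>v M :: real vec)"
        then have k: "k < M" by simp
        show "v $ k = 0\<^sub>v M $ k" using z[OF k] lpos[OF k] k by simp
      qed (use vc in simp)
    qed
    show ?thesis using V.full_rank_from_null(1)[OF Dc N] True by simp
  next
    case False
    have a0: "alpha \<noteq> 0\<^sub>v M"
    proof
      assume "alpha = 0\<^sub>v M"
      then have "alpha $ 0 = 0" using M by simp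
      then show False using lpos[of 0] M by (simp add: alpha_def)
    qed
    have up: "V.rank D < M" by (rule V.rank_lt_from_dep[OF Dc ac a0 Dalpha[OF False[simplified]]])
    define B where "B = mat (2^M) (M-1) (\<lambda>(i,j). D $$ (i,j))"
    have Bc: "B \<in> carrier_mat (2^M) (M-1)" by (simp add: B_def)
    have sub: "set (cols B) \<subseteq> set (cols D)"
    proof
      fix w assume "w \<in> set (cols B)"
      then obtain j where j: "j < M - 1" "w = col B j" using Bc by (auto simp: in_set_conv_nth)
      have "col B j = col D j"
        using j Dc by (auto simp: B_def intro!: eq_vecI)
      moreover have "col D j \<in> set (cols D)" using j Dc by (auto simp: in_set_conv_nth intro!: exI[of _ j])
      ultimately show "w \<in> set (cols D)" using j by simp
    qed
    have NB: "\<forall>v\<in>carrier_vec (M-1). B *\<^sub>v v = 0\<^sub>v (2^M) \<longrightarrow> v = 0\<^sub>v (M-1)"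
    proof (intro ballI impI)
      fix v :: "real vec" assume vc: "v \<in> carrier_vec (M-1)" and Bv: "B *\<^sub>v v = 0\<^sub>v (2^M)"
      define x where "x c = (if c < M - 1 then v $ c else 0)" for c
      have S: "(\<Sum>c<M. D $$ (i,c) * x c) = 0" if i: "i < 2^M" for i
      proof -
        have "(\<Sum>c<M. D $$ (i,c) * x c) = (\<Sum>c<Suc (M-1). D $$ (i,c) * x c)" using M by simp
        also have "\<dots> = (\<Sum>c<M-1. D $$ (i,c) * x c)" by (simp add: x_def)
        also have "\<dots> = (\<Sum>c<M-1. B $$ (i,c) * v $ c)"
          by (rule sum.cong) (use i in \<open>auto simp: x_def B_def\<close>)
        also have "\<dots> = (B *\<^sub>v v) $ i" using mult_entry[OF Bc vc i] by simp
        also have "\<dots> = 0" using Bv i by simp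
        finally show ?thesis .
      qed
      have zl: "(\<lambda>c. lam (c+1) * x c) (M-1) = 0" by (simp add: x_def)
      have z: "lam (k+1) * x k = 0" if "k < M" for k
        using zero_even[of M "\<lambda>c. lam (c+1) * x c", OF M pairs[OF S] zl that] by simp
      show "v = 0\<^sub>v (M-1)"
      proof (rule eq_vecI)
        fix k assume "k < dim_vec (0\<^sub>v (M-1) :: real vec)"
        then have k: "k < M - 1" by simp
        have "lam (k+1) * v $ k = 0" using z[of k] k by (simp add: x_def)
        moreover have "lam (k+1) > 0" using lpos[of k] k by simp
        ultimately show "v $ k = 0\<^sub>v (M-1) $ k" using k by simp
      qed (use vc in simp)
    qed
    have low: "V.rank D \<ge> M - 1" by (rule V.rank_ge_sub[OF Dc Bc sub NB])
    show ?thesis using up low False by simp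
  qed
  show ?thesis using rank_eq Dalpha unfolding D_def alpha_def by simp
qed

end
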